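(* There is no function $f : \mathbb{N} \to (0,+\infty)$ such that $\mathsf{LowerCalDist}(x,p) \ge f(T)\cdot \mathsf{CalDist}(x,p)$ holds for all positive integers $T$, all $x \in \{0,1\}^T$ and all $p \in [0,1]^T$.
   Context: For $x \in \{0,1\}^T$, let $\mathcal{C}(x) = \{q \in [0,1]^T : \sum_{t=1}^T (x_t - q_t)\mathbf{1}[q_t = \alpha] = 0 \text{ for all } \alpha \in [0,1]\}$ and $\mathsf{CalDist}(x,p) = \min_{q \in \mathcal{C}(x)} \|p-q\|_1$. Let $\underline{\mathcal{C}}(x)$ be the set of $T$-tuples $\mathcal{D} = (\mathcal{D}_1,\ldots,\mathcal{D}_T)$ of probability distributions, each with finite support contained in $[0,1]$, such that $\sum_{t=1}^T (x_t - \alpha)\mathcal{D}_t(\alpha) = 0$ for every $\alpha \in [0,1]$. Then $\mathsf{LowerCalDist}(x,p) = \inf_{\mathcal{D} \in \underline{\mathcal{C}}(x)} \sum_{t=1}^T \mathbb{E}_{q_t \sim \mathcal{D}_t}|p_t - q_t|$. *)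

theory Defs
  imports "HOL-Probability.Probability_Mass_Function"
begin

text \<open>Sequences of length T are represented as functions on nat, only the
values at indices t < T matter (index t stands for t+1 of the paper).\<close>

definition cal_set :: "nat \<Rightarrow> (nat \<Rightarrow> real) \<Rightarrow> (nat \<Rightarrow> real) set" where
  "cal_set T x = {q. (\<forall>t<T. q t \<in> {0..1}) \<and>
      (\<forall>\<alpha>::real. (\<Sum>t<T. (x t - q t) * (if q t = \<alpha> then 1 else 0)) = 0)}"

definition CalDist :: "nat \<Rightarrow> (nat \<Rightarrow> real) \<Rightarrow> (nat \<Rightarrow> real) \<Rightarrow> real" where
  "CalDist T x p = Inf ((\<lambda>q. \<Sum>t<T. \<bar>p t - q t\<bar>) ` cal_set T x)"

definition lower_cal_set :: "nat \<Rightarrow> (nat \<Rightarrow> real) \<Rightarrow> (nat \<Rightarrow> real pmf) set" where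
  "lower_cal_set T x = {D. (\<forall>t<T. finite (set_pmf (D t)) \<and> set_pmf (D t) \<subseteq> {0..1}) \<and>
      (\<forall>\<alpha>::real. (\<Sum>t<T. (x t - \<alpha>) * pmf (D t) \<alpha>) = 0)}"

definition LowerCalDist :: "nat \<Rightarrow> (nat \<Rightarrow> real) \<Rightarrow> (nat \<Rightarrow> real) \<Rightarrow> real" where
  "LowerCalDist T x p = Inf ((\<lambda>D. \<Sum>t<T. measure_pmf.expectation (D t) (\<lambda>q. \<bar>p t - q\<bar>))
      ` lower_cal_set T x)"

end

theory Submission imports Defs
begin

definition tp :: "real \<Rightarrow> real \<Rightarrow> real \<Rightarrow> real pmf" where
  "tp u v w = map_pmf (\<lambda>b. if b then u else v) (bernoulli_pmf w)"

lemma tp_set: "set_pmf (tp u v w) \<subseteq> {u, v}"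
  unfolding tp_def by auto

lemma tp_pmf:
  assumes "u \<noteq> v" "0 \<le> w" "w \<le> 1"
  shows "pmf (tp u v w) y = (if y = u then w else 0) + (if y = v then 1 - w else 0)"
proof -
  have "pmf (tp u v w) y = measure_pmf.prob (bernoulli_pmf w) ((\<lambda>b. if b then u else v) -` {y})"
    unfolding tp_def by (rule pmf_map)
  also have "\<dots> = (\<Sum>b\<in>(\<lambda>b. if b then u else v) -` {y}. pmf (bernoulli_pmf w) b)"
    by (rule measure_measure_pmf_finite) simp
  also have "\<dots> = (if y = u then w else 0) + (if y = v then 1 - w else 0)"
  proof -
    have "(\<lambda>b. if b then u else v) -` {y} = (if y = u then {True} else {}) \<union> (if y = v then {False} else {})"
      using assms(1) by (auto split: if_splits)
    then show ?thesis using assms by (auto simp: sum.union_disjoint)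
  qed
  finally show ?thesis .
qed

lemma tp_exp:
  assumes "0 \<le> w" "w \<le> 1"
  shows "measure_pmf.expectation (tp u v w) g = w * g u + (1 - w) * g v"
  unfolding tp_def using assms by simp


definition xx :: "nat \<Rightarrow> real" where "xx t = (if t = 0 \<or> t = 2 then 1 else 0)"
definition pp :: "real \<Rightarrow> nat \<Rightarrow> real" where "pp a t = (if t < 2 then a else 1 - a)"

lemma sum4: "(\<Sum>t<(4::nat). g t) = g 0 + g 1 + g 2 + (g 3 :: real)"
  by (simp add: eval_nat_numeral)

lemma cal_bound:
  assumes a: "1/2 < a" "a \<le> 3/4" and q: "q \<in> cal_set 4 xx"
  shows "(\<Sum>t<4. \<bar>pp a t - q t\<bar>) \<ge> a - 1/2"
proof -
  from q have r: "\<forall>t<4. q t \<in> {0..1}"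
    and c: "(\<Sum>t<4. (xx t - q t) * (if q t = q 0 then 1 else 0)) = 0"
    unfolding cal_set_def by auto
  have r0: "0 \<le> q 0" "q 0 \<le> 1" "0 \<le> q 1" "q 1 \<le> 1" "0 \<le> q 2" "q 2 \<le> 1" "0 \<le> q 3" "q 3 \<le> 1"
    using r by (auto simp: eval_nat_numeral less_Suc_eq)
  from c have "(1 - q 0) + (0 - q 1) * (if q 1 = q 0 then 1 else 0) + (1 - q 2) * (if q 2 = q 0 then 1 else 0)
      + (0 - q 3) * (if q 3 = q 0 then 1 else 0) = 0"
    by (simp add: sum4 xx_def)
  then show ?thesis using a r0 unfolding sum4 pp_def
    by (auto split: if_splits)
qed


lemma cal_ge:
  assumes a: "1/2 < a" "a \<le> 3/4"
  shows "CalDist 4 xx (pp a) \<ge> a - 1/2"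
proof -
  have "(\<lambda>_. 1/2) \<in> cal_set 4 xx"
    unfolding cal_set_def by (simp add: sum4 xx_def)
  then show ?thesis unfolding CalDist_def
    by (intro cInf_greatest) (auto intro: cal_bound[OF a])
qed

definition DD :: "real \<Rightarrow> nat \<Rightarrow> real pmf" where
  "DD a t = (let s = (1 - a) / a in
     if t = 0 then tp a (1 - a) 1 else if t = 1 then tp a (1 - a) s
     else if t = 2 then tp (1 - a) 1 (s * (2 - s)) else tp (1 - a) a 1)"

lemma DD_in:
  assumes a: "1/2 < a" "a \<le> 3/4"
  shows "DD a \<in> lower_cal_set 4 xx"
proof -
  define s where "s = (1 - a) / a"
  have s0: "0 \<le> s" "s \<le> 1"
    using a by (auto simp: s_def field_simps)
  have s2: "s * (2 - s) = 1 - (1 - s)^2" by (simp add: power2_eq_square algebra_simps)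
  have s: "0 \<le> s" "s \<le> 1" "0 \<le> s * (2 - s)" "s * (2 - s) \<le> 1"
    using s0 by (auto simp: s2 power_le_one)
  have sa: "s * a = 1 - a" using a by (simp add: s_def)
  have fin: "finite (set_pmf (tp u v w))" for u v w
    using tp_set[of u v w] finite_subset by blast
  have "\<forall>t<4. finite (set_pmf (DD a t)) \<and> set_pmf (DD a t) \<subseteq> {0..1}"
  proof (intro allI impI conjI)
    fix t :: nat
    show "finite (set_pmf (DD a t))" unfolding DD_def Let_def by (simp add: fin)
    show "set_pmf (DD a t) \<subseteq> {0..1}" unfolding DD_def Let_def
      using tp_set a by (auto 0 3 dest: subsetD[OF tp_set])
  qed
  moreover have "(\<Sum>t<4. (xx t - y) * pmf (DD a t) y) = 0" for y
  proof -
    have ne: "a \<noteq> 1 - a" "1 - a \<noteq> 1" "a \<noteq> 1" using a by auto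
    have "(\<Sum>t<4. (xx t - y) * pmf (DD a t) y) =
      (1 - y) * ((if y = a then 1 else 0) + (if y = 1 - a then 1 - 1 else 0))
      + (0 - y) * ((if y = a then s else 0) + (if y = 1 - a then 1 - s else 0))
      + (1 - y) * ((if y = 1 - a then s * (2 - s) else 0) + (if y = 1 then 1 - s * (2 - s) else 0))
      + (0 - y) * ((if y = 1 - a then 1 else 0) + (if y = a then 1 - 1 else 0))"
      unfolding sum4 DD_def Let_def s_def[symmetric] xx_def
      using ne s by (simp add: tp_pmf)
    also have "\<dots> = 0"
    proof -
      have "a * (s * (2 - s)) = (s * a) * (2 - s)" by (simp add: algebra_simps)
      then have "a * (s * (2 - s)) = (1 - a) * (2 - s)" using sa by simp
      then have key: "(1 - (1 - a)) * (s * (2 - s)) = (1 - a) * (2 - s)" by simp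
      show ?thesis
      proof (cases "y = a")
        case True then show ?thesis using ne sa by (simp add: algebra_simps)
      next
        case F1: False
        show ?thesis
        proof (cases "y = 1 - a")
          case True
          have h: "(1 - y) * (s * (2 - s)) = (1 - a) * (2 - s)" using key True by simp
          have b1: "(y = a) = False" "(y = 1 - a) = True" "(y = 1) = False" using True F1 ne by auto
          have "(1 - y) * (s * (2 - s)) + (0 - y) * (1 - s) + (0 - y) * 1 = 0"
          proof -
            have "(0 - y) * (1 - s) + (0 - y) * 1 = - ((1 - a) * (2 - s))"
              unfolding True by (simp add: algebra_simps)
            then show ?thesis using h by linarith
          qed
          then show ?thesis by (simp only: b1 if_True if_False add_0_right add_0_left mult_0_right diff_self)
        next
          case False then show ?thesis using F1 by simp
        qed
      qed
    qed
    finally show ?thesis .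
  qed
  ultimately show ?thesis unfolding lower_cal_set_def by auto
qed

lemma lower_le:
  assumes a: "1/2 < a" "a \<le> 3/4"
  shows "LowerCalDist 4 xx (pp a) \<le> 2 * (2 * a - 1)^2 / a"
proof -
  define s where "s = (1 - a) / a"
  have s0: "0 \<le> s" "s \<le> 1"
    using a by (auto simp: s_def field_simps)
  have s2: "s * (2 - s) = 1 - (1 - s)^2" by (simp add: power2_eq_square algebra_simps)
  have s: "0 \<le> s" "s \<le> 1" "0 \<le> s * (2 - s)" "s * (2 - s) \<le> 1"
    using s0 by (auto simp: s2 power_le_one)
  have "(\<Sum>t<4. measure_pmf.expectation (DD a t) (\<lambda>q. \<bar>pp a t - q\<bar>)) =
     (1 - s) * \<bar>a - (1 - a)\<bar> + (1 - s * (2 - s)) * \<bar>(1 - a) - 1\<bar>"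
    unfolding sum4 DD_def Let_def s_def[symmetric] pp_def using s by (simp add: tp_exp)
  also have "\<dots> = 2 * (2 * a - 1)^2 / a"
    using a by (simp add: s_def field_simps power2_eq_square)
  finally have e: "(\<Sum>t<4. measure_pmf.expectation (DD a t) (\<lambda>q. \<bar>pp a t - q\<bar>)) = 2 * (2 * a - 1)^2 / a" .
  have bdd: "bdd_below ((\<lambda>D. \<Sum>t<4. measure_pmf.expectation (D t) (\<lambda>q. \<bar>pp a t - q\<bar>)) ` lower_cal_set 4 xx)"
    by (rule bdd_belowI[of _ 0]) (auto intro!: sum_nonneg Bochner_Integration.integral_nonneg)
  show ?thesis unfolding LowerCalDist_def
    using cInf_lower[OF imageI[OF DD_in[OF a]] bdd] e by simp
qed

theorem proposition2:
  shows "\<not> (\<exists>f :: nat \<Rightarrow> real. (\<forall>n. f n > 0) \<and>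
           (\<forall>T>0. \<forall>x p. (\<forall>t<T. x t \<in> {0, 1}) \<longrightarrow> (\<forall>t<T. p t \<in> {0..1}) \<longrightarrow>
              LowerCalDist T x p \<ge> f T * CalDist T x p))"
proof
  assume "\<exists>f :: nat \<Rightarrow> real. (\<forall>n. f n > 0) \<and>
           (\<forall>T>0. \<forall>x p. (\<forall>t<T. x t \<in> {0, 1}) \<longrightarrow> (\<forall>t<T. p t \<in> {0..1}) \<longrightarrow>
              LowerCalDist T x p \<ge> f T * CalDist T x p)"
  then obtain f :: "nat \<Rightarrow> real" where fpos: "\<forall>n. f n > 0" and H0: "\<forall>T>0. \<forall>x p. (\<forall>t<T. x t \<in> {0, 1}) \<longrightarrow> (\<forall>t<T. p t \<in> {0..1}) \<longrightarrow>
              LowerCalDist T x p \<ge> f T * CalDist T x p"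
    by (elim exE conjE)
  have H: "LowerCalDist T x p \<ge> f T * CalDist T x p"
    if "T > 0" "\<forall>t<T. x t \<in> {0, 1}" "\<forall>t<T. p t \<in> {0..1}" for T x p
    using H0 that by blast
  define c where "c = f 4"
  have c: "c > 0" using fpos by (simp add: c_def)
  define e where "e = min (1/4) (c / 32)"
  have e: "0 < e" "e \<le> 1/4" "e \<le> c / 32" using c by (auto simp: e_def)
  define a where "a = 1/2 + e"
  have a: "1/2 < a" "a \<le> 3/4" using e by (auto simp: a_def)
  have ae: "a - 1/2 = e" "2 * a - 1 = 2 * e" by (simp_all add: a_def)
  have x01: "\<forall>t<4. xx t \<in> {0, 1}" by (simp add: xx_def)
  have p01: "\<forall>t<4. pp a t \<in> {0..1}" using a by (simp add: pp_def)
  have 1: "LowerCalDist 4 xx (pp a) \<ge> c * CalDist 4 xx (pp a)"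
    unfolding c_def by (rule H[OF _ x01 p01]) simp
  have 2: "c * CalDist 4 xx (pp a) \<ge> c * e"
    using mult_left_mono[OF cal_ge[OF a] less_imp_le[OF c]] unfolding ae .
  have 3: "LowerCalDist 4 xx (pp a) \<le> 2 * (2 * e)^2 / a"
    using lower_le[OF a] unfolding ae .
  have 4: "2 * (2 * e)^2 / a \<le> 16 * e * e"
  proof -
    have "2 * (2 * e)^2 / a = (8 * e * e) / a" by (simp add: power2_eq_square)
    also have "\<dots> \<le> (8 * e * e) / (1/2)"
      by (rule divide_left_mono) (use a e in auto)
    finally show ?thesis by simp
  qed
  have 5: "16 * e * e \<le> c * e / 2"
  proof -
    have "16 * e \<le> c / 2" using e by linarith
    then have "16 * e * e \<le> c / 2 * e" using e by (intro mult_right_mono) auto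
    then show ?thesis by simp
  qed
  from 1 2 3 4 5 have "c * e \<le> c * e / 2" by linarith
  moreover have "0 < c * e" using c e by simp
  ultimately show False by linarith
qed

end
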